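(* Let $\delta\in\mathbb{Z}$. The process $N_n-\theta(M_n)=N_n-\sum_{k=0}^{M_n}s_k$, $n\ge 1$, is a martingale with respect to the filtration $\{\mathcal{F}_n\}$. Moreover, this martingale is cubic integrable (i.e. $E|N_n-\theta(M_n)|^3<\infty$ for every $n\ge1$) if one of the following holds: (a) $\delta<0$ and $\limsup_k r_k<1$; (b) $\delta<0$, $\lim_k r_k=1$ and $\lim_k (1-r_k)/(1-r_{k-1})=1$; (c) $\delta\ge 0$.
   Context: Let $\{X_n,n\ge1\}$ be independent, identically distributed random variables with values in $\mathbb{Z}_+=\{0,1,2,\dots\}$ such that $p_k=P[X_1=k]>0$ for every $k\in\mathbb{Z}_+$ (set $p_m=0$ for integers $m\le -1$). For $k\in\mathbb{Z}_+$ let $y_k=\sum_{i>k}p_i=P[X_1>k]$, and set $y_m=1$ for integers $m\le-1$. The discrete failure rate is $r_k=p_k/y_{k-1}$, $k\in\mathbb{Z}_+$. Fix an integer $\delta$ and define the $\delta$ failure rate $s_k=p_{k+\delta}/y_{k-1}$ and $\theta(k)=\sum_{i=0}^k s_i$ for $k\in\mathbb{Z}_+$. Let $M_0=0$ and $M_n=\max\{X_1,\dots,X_n\}$ for $n\ge1$. Let $I_k=\mathbf{1}_{\{X_k>M_{k-1}+\delta\}}$ and $N_n=\sum_{k=1}^n I_k$ (the number of $\delta$-records among the first $n$ observations). Let $\mathcal{F}_0=\{\emptyset,\Omega\}$ and $\mathcal{F}_n=\sigma(X_1,\dots,X_n)$ for $n\ge1$. *)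

theory Defs
  imports "HOL-Probability.Probability"
begin

definition pk :: "'a measure \<Rightarrow> (nat \<Rightarrow> 'a \<Rightarrow> nat) \<Rightarrow> int \<Rightarrow> real" where
  "pk M X m = (if m < 0 then 0 else measure M {\<omega> \<in> space M. X 1 \<omega> = nat m})"

definition yk :: "'a measure \<Rightarrow> (nat \<Rightarrow> 'a \<Rightarrow> nat) \<Rightarrow> int \<Rightarrow> real" where
  "yk M X m = (if m < 0 then 1 else measure M {\<omega> \<in> space M. X 1 \<omega> > nat m})"

definition rk :: "'a measure \<Rightarrow> (nat \<Rightarrow> 'a \<Rightarrow> nat) \<Rightarrow> int \<Rightarrow> real" where
  "rk M X k = pk M X k / yk M X (k - 1)"

definition sk :: "'a measure \<Rightarrow> (nat \<Rightarrow> 'a \<Rightarrow> nat) \<Rightarrow> int \<Rightarrow> int \<Rightarrow> real" where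
  "sk M X \<delta> k = pk M X (k + \<delta>) / yk M X (k - 1)"

definition theta :: "'a measure \<Rightarrow> (nat \<Rightarrow> 'a \<Rightarrow> nat) \<Rightarrow> int \<Rightarrow> nat \<Rightarrow> real" where
  "theta M X \<delta> k = (\<Sum>i=0..k. sk M X \<delta> (int i))"

definition maxX :: "(nat \<Rightarrow> 'a \<Rightarrow> nat) \<Rightarrow> nat \<Rightarrow> 'a \<Rightarrow> nat" where
  "maxX X n \<omega> = (if n = 0 then 0 else Max ((\<lambda>i. X i \<omega>) ` {1..n}))"

definition Nrec :: "(nat \<Rightarrow> 'a \<Rightarrow> nat) \<Rightarrow> int \<Rightarrow> nat \<Rightarrow> 'a \<Rightarrow> real" where
  "Nrec X \<delta> n \<omega> = (\<Sum>k=1..n. if int (X k \<omega>) > int (maxX X (k - 1) \<omega>) + \<delta> then 1 else 0)"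

definition natfilt :: "'a measure \<Rightarrow> (nat \<Rightarrow> 'a \<Rightarrow> nat) \<Rightarrow> nat \<Rightarrow> 'a measure" where
  "natfilt M X n = sigma (space M) {X i -` A \<inter> space M | i A. i \<in> {1..n}}"

definition martingale_on ::
  "'a measure \<Rightarrow> (nat \<Rightarrow> 'a measure) \<Rightarrow> (nat \<Rightarrow> 'a \<Rightarrow> real) \<Rightarrow> bool" where
  "martingale_on M F Z \<longleftrightarrow>
     (\<forall>n\<ge>1. subalgebra M (F n) \<and> Z n \<in> borel_measurable (F n) \<and> integrable M (Z n)) \<and>
     (\<forall>m n. 1 \<le> m \<longrightarrow> m \<le> n \<longrightarrow> sets (F m) \<subseteq> sets (F n)) \<and>
     (\<forall>m n. 1 \<le> m \<longrightarrow> m \<le> n \<longrightarrow>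
        (AE \<omega> in M. real_cond_exp M (F m) (Z n) \<omega> = Z m \<omega>))"

end

theory Submission
  imports Defs
begin

lemma cs_meas1:
  assumes "f \<in> measurable N (count_space (UNIV::nat set))" "\<And>a. h a \<in> space K"
  shows "(\<lambda>\<omega>. h (f \<omega>)) \<in> measurable N K"
  by (rule measurable_compose[OF assms(1)]) (use assms(2) in auto)

lemma maxX_0[simp]: "maxX X 0 \<omega> = 0" by (simp add: maxX_def)

lemma Nrec_0[simp]: "Nrec X \<delta> 0 \<omega> = 0" by (simp add: Nrec_def)

lemma sets_natfilt: "sets (natfilt M X n) = sigma_sets (space M) {X i -` A \<inter> space M | i A. i \<in> {1..n}}"
  unfolding natfilt_def by (rule sets_measure_of) auto

lemma space_natfilt[simp]: "space (natfilt M X n) = space M"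
  unfolding natfilt_def by (rule space_measure_of) auto

lemma cs_meas2:
  assumes "f \<in> measurable N (count_space (UNIV::nat set))" "g \<in> measurable N (count_space (UNIV::nat set))"
    "\<And>a b. h a b \<in> space K"
  shows "(\<lambda>\<omega>. h (f \<omega>) (g \<omega>)) \<in> measurable N K"
proof -
  have "(\<lambda>\<omega>. (f \<omega>, g \<omega>)) \<in> measurable N (count_space UNIV \<Otimes>\<^sub>M count_space UNIV)"
    using assms by (intro measurable_Pair) auto
  also have "count_space (UNIV::nat set) \<Otimes>\<^sub>M count_space (UNIV::nat set) = count_space UNIV"
    by (simp add: pair_measure_countable)
  finally have P: "(\<lambda>\<omega>. (f \<omega>, g \<omega>)) \<in> measurable N (count_space UNIV)" .
  have "(\<lambda>\<omega>. case_prod h (f \<omega>, g \<omega>)) \<in> measurable N K"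
    by (rule measurable_compose[OF P]) (use assms(3) in auto)
  then show ?thesis by simp
qed

lemma Nrec_Suc: "Nrec X \<delta> (Suc n) \<omega> = Nrec X \<delta> n \<omega> +
   (if int (X (Suc n) \<omega>) > int (maxX X n \<omega>) + \<delta> then 1 else 0)"
  by (simp add: Nrec_def)

lemma maxX_Suc: "maxX X (Suc n) \<omega> = max (maxX X n \<omega>) (X (Suc n) \<omega>)"
proof (cases n)
  case 0 then show ?thesis by (simp add: maxX_def)
next
  case (Suc k)
  have "(\<lambda>i. X i \<omega>) ` {1..Suc n} = insert (X (Suc n) \<omega>) ((\<lambda>i. X i \<omega>) ` {1..n})"
    by (simp add: atLeastAtMostSuc_conv)
  moreover have "(\<lambda>i. X i \<omega>) ` {1..n} \<noteq> {}" using Suc by auto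
  ultimately show ?thesis using Suc unfolding maxX_def by (simp add: Max_insert max.commute)
qed

lemma natfilt_mono: assumes "m \<le> n" shows "sets (natfilt M X m) \<subseteq> sets (natfilt M X n)"
  unfolding sets_natfilt
proof (rule sigma_sets_mono', rule subsetI)
  fix x assume "x \<in> {X i -` A \<inter> space M | i A. i \<in> {1..m}}"
  then obtain i A where "x = X i -` A \<inter> space M" "i \<in> {1..m}" by blast
  then show "x \<in> {X i -` A \<inter> space M | i A. i \<in> {1..n}}" using assms
    by (intro CollectI exI[of _ i] exI[of _ A]) auto
qed

lemma X_meas_natfilt: "1 \<le> i \<Longrightarrow> i \<le> n \<Longrightarrow> X i \<in> measurable (natfilt M X n) (count_space UNIV)"
proof (rule measurableI)
  fix A assume "1 \<le> i" "i \<le> n"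
  then have "X i -` A \<inter> space M \<in> {X i -` A \<inter> space M | i A. i \<in> {1..n}}"
    by (intro CollectI exI[of _ i] exI[of _ A]) simp
  then show "X i -` A \<inter> space (natfilt M X n) \<in> sets (natfilt M X n)"
    unfolding sets_natfilt space_natfilt by (rule sigma_sets.Basic)
qed simp


lemma maxX_meas_natfilt: "k \<le> n \<Longrightarrow> maxX X k \<in> measurable (natfilt M X n) (count_space UNIV)"
proof (induction k)
  case 0
  have "maxX X 0 = (\<lambda>_. 0)" by (rule ext) simp
  then show ?case by simp
next
  case (Suc k)
  have "(\<lambda>\<omega>. max (maxX X k \<omega>) (X (Suc k) \<omega>)) \<in> measurable (natfilt M X n) (count_space UNIV)"
  proof (rule cs_meas2[where h=max and f="maxX X k" and g="X (Suc k)"])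
    show "maxX X k \<in> measurable (natfilt M X n) (count_space UNIV)" using Suc by simp
    show "X (Suc k) \<in> measurable (natfilt M X n) (count_space UNIV)"
      using Suc(2) by (intro X_meas_natfilt) auto
  qed simp
  moreover have "maxX X (Suc k) = (\<lambda>\<omega>. max (maxX X k \<omega>) (X (Suc k) \<omega>))"
    by (rule ext) (rule maxX_Suc)
  ultimately show ?case by simp
qed

locale recs = prob_space M for M :: "'a measure" +
  fixes X :: "nat \<Rightarrow> 'a \<Rightarrow> nat" and \<delta> :: int
  assumes Xm: "\<And>i. i \<ge> 1 \<Longrightarrow> X i \<in> measurable M (count_space UNIV)"
    and ind: "indep_vars (\<lambda>_. count_space UNIV) X {1..}"
    and idist: "\<And>i. i \<ge> 1 \<Longrightarrow> distr M (count_space UNIV) (X i) = distr M (count_space UNIV) (X 1)"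
    and ppos: "\<And>k. measure M {\<omega> \<in> space M. X 1 \<omega> = k} > 0"
begin

lemma Xsets: assumes "i \<ge> 1" shows "{\<omega>\<in>space M. P (X i \<omega>)} \<in> events"
proof -
  have "X i -` {x. P x} \<inter> space M \<in> events" by (rule measurable_sets[OF Xm[OF assms]]) simp
  moreover have "X i -` {x. P x} \<inter> space M = {\<omega>\<in>space M. P (X i \<omega>)}" by blast
  ultimately show ?thesis by simp
qed

lemma same_dist: assumes "i \<ge> 1" shows "prob {\<omega>\<in>space M. P (X i \<omega>)} = prob {\<omega>\<in>space M. P (X 1 \<omega>)}"
proof -
  have "measure (distr M (count_space UNIV) (X i)) {x. P x} = measure (distr M (count_space UNIV) (X 1)) {x. P x}"
    using idist[OF assms] by simp
  then have "prob (X i -` {x. P x} \<inter> space M) = prob (X 1 -` {x. P x} \<inter> space M)"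
    using Xm[OF assms] Xm[of 1] by (simp add: measure_distr)
  moreover have "\<And>j. X j -` {x. P x} \<inter> space M = {\<omega>\<in>space M. P (X j \<omega>)}" by blast
  ultimately show ?thesis by simp
qed

lemma subalg: "subalgebra M (natfilt M X n)"
proof -
  have "{X i -` A \<inter> space M | i A. i \<in> {1..n}} \<subseteq> sets M"
  proof
    fix x assume "x \<in> {X i -` A \<inter> space M | i A. i \<in> {1..n}}"
    then obtain i A where "x = X i -` A \<inter> space M" "i \<in> {1..n}" by blast
    then show "x \<in> sets M" using measurable_sets[OF Xm, of i A] by simp
  qed
  then have "sets (natfilt M X n) \<subseteq> sets M" unfolding sets_natfilt by (rule sets.sigma_sets_subset)
  then show ?thesis unfolding subalgebra_def by simp
qed

lemma natfilt_sets_M: "B \<in> sets (natfilt M X n) \<Longrightarrow> B \<in> events"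
  using subalg[of n] unfolding subalgebra_def by blast

lemma maxX_meas: "maxX X n \<in> measurable M (count_space UNIV)"
  by (rule measurable_from_subalg[OF subalg maxX_meas_natfilt[OF order_refl]])

lemma eqset_natfilt: "{\<omega>\<in>space M. maxX X n \<omega> = m} \<in> sets (natfilt M X n)"
proof -
  have "maxX X n -` {m} \<inter> space (natfilt M X n) \<in> sets (natfilt M X n)"
    by (rule measurable_sets[OF maxX_meas_natfilt[OF order_refl]]) simp
  moreover have "maxX X n -` {m} \<inter> space (natfilt M X n) = {\<omega>\<in>space M. maxX X n \<omega> = m}" by auto
  ultimately show ?thesis by simp
qed

lemma indep_F:
  assumes "C \<in> sets (natfilt M X n)"
  shows "prob (C \<inter> (X (Suc n) -` S \<inter> space M)) = prob C * prob (X (Suc n) -` S \<inter> space M)"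
proof -
  let ?E = "\<lambda>i. {X i -` A \<inter> space M | A. A \<in> sets (count_space (UNIV::nat set))}"
  let ?I = "\<lambda>b::bool. if b then {1..n} else {Suc n}"
  have E: "indep_sets ?E {1..}" using ind unfolding indep_vars_def2 by blast
  have "indep_sets (\<lambda>b. sigma_sets (space M) (\<Union>i\<in>?I b. ?E i)) UNIV"
  proof (rule indep_sets_collect_sigma)
    show "indep_sets ?E (\<Union>b\<in>UNIV. ?I b)" by (rule indep_sets_mono_index[OF _ E]) auto
  next
    fix b i assume "b \<in> (UNIV::bool set)" "i \<in> ?I b"
    show "Int_stable (?E i)"
      apply (auto simp: Int_stable_def)
      apply (rule_tac x="A \<inter> Aa" in exI)
      apply auto
      done
  next
    show "disjoint_family_on ?I UNIV" by (auto simp: disjoint_family_on_def)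
  qed
  moreover have "(\<lambda>b. sigma_sets (space M) (\<Union>i\<in>?I b. ?E i)) =
      case_bool (sigma_sets (space M) (\<Union>i\<in>{1..n}. ?E i)) (sigma_sets (space M) (?E (Suc n)))"
    by (rule ext) (simp split: bool.split)
  ultimately have "indep_set (sigma_sets (space M) (\<Union>i\<in>{1..n}. ?E i)) (sigma_sets (space M) (?E (Suc n)))"
    unfolding indep_set_def by simp
  then have I: "\<And>a b. a \<in> sigma_sets (space M) (\<Union>i\<in>{1..n}. ?E i) \<Longrightarrow> b \<in> sigma_sets (space M) (?E (Suc n)) \<Longrightarrow>
      prob (a \<inter> b) = prob a * prob b"
    unfolding indep_sets2_eq by blast
  have G: "{X i -` A \<inter> space M | i A. i \<in> {1..n}} = (\<Union>i\<in>{1..n}. ?E i)"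
  proof (rule set_eqI, rule iffI)
    fix x assume "x \<in> {X i -` A \<inter> space M | i A. i \<in> {1..n}}"
    then obtain i A where "x = X i -` A \<inter> space M" "i \<in> {1..n}" by blast
    then show "x \<in> (\<Union>i\<in>{1..n}. ?E i)"
      by (intro UN_I[of i] CollectI exI[of _ A]) auto
  next
    fix x assume "x \<in> (\<Union>i\<in>{1..n}. ?E i)"
    then obtain i where i: "i \<in> {1..n}" "x \<in> ?E i" by blast
    then obtain A where "x = X i -` A \<inter> space M" by blast
    then show "x \<in> {X i -` A \<inter> space M | i A. i \<in> {1..n}}" using i(1)
      by (intro CollectI exI[of _ i] exI[of _ A]) auto
  qed
  show ?thesis
  proof (rule I)
    show "C \<in> sigma_sets (space M) (\<Union>i\<in>{1..n}. ?E i)" using assms unfolding sets_natfilt G .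
    show "X (Suc n) -` S \<inter> space M \<in> sigma_sets (space M) (?E (Suc n))"
      by (rule sigma_sets.Basic) auto
  qed
qed


lemma eqset_M: assumes "Y \<in> measurable M (count_space (UNIV::nat set))"
  shows "{\<omega>\<in>space M. Y \<omega> = y} \<in> events"
proof -
  have "Y -` {y} \<inter> space M \<in> events" by (rule measurable_sets[OF assms]) simp
  moreover have "Y -` {y} \<inter> space M = {\<omega>\<in>space M. Y \<omega> = y}" by blast
  ultimately show ?thesis by simp
qed

lemma decomp:
  assumes Y: "Y \<in> measurable M (count_space (UNIV::nat set))" and f: "f \<in> borel_measurable M"
  shows "(\<integral>\<^sup>+\<omega>. f \<omega> \<partial>M) = (\<Sum>y. \<integral>\<^sup>+\<omega>. f \<omega> * indicator {\<omega>\<in>space M. Y \<omega> = y} \<omega> \<partial>M)"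
proof -
  have df: "disjoint_family (\<lambda>y. {\<omega>\<in>space M. Y \<omega> = y})" by (auto simp: disjoint_family_on_def)
  have [measurable]: "f \<in> borel_measurable M" "\<And>y. {\<omega>\<in>space M. Y \<omega> = y} \<in> sets M"
    using f eqset_M[OF Y] by auto
  have "(\<integral>\<^sup>+\<omega>. f \<omega> \<partial>M) = (\<integral>\<^sup>+\<omega>. (\<Sum>y. f \<omega> * indicator {\<omega>\<in>space M. Y \<omega> = y} \<omega>) \<partial>M)"
  proof (rule nn_integral_cong)
    fix \<omega> assume "\<omega> \<in> space M"
    then show "f \<omega> = (\<Sum>y. f \<omega> * indicator {\<omega>\<in>space M. Y \<omega> = y} \<omega>)"
      using suminf_cmult_indicator[OF df, of \<omega> "Y \<omega>" "\<lambda>_. f \<omega>"] by simp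
  qed
  also have "\<dots> = (\<Sum>y. \<integral>\<^sup>+\<omega>. f \<omega> * indicator {\<omega>\<in>space M. Y \<omega> = y} \<omega> \<partial>M)"
    by (rule nn_integral_suminf) measurable
  finally show ?thesis .
qed

lemma pk_nonneg[simp]: "pk M X k \<ge> 0"
  by (simp add: pk_def)

lemma pk_nat: "pk M X (int x) = prob {\<omega>\<in>space M. X 1 \<omega> = x}"
  by (simp add: pk_def)

lemma Dlem:
  fixes g :: "nat \<Rightarrow> nat \<Rightarrow> ennreal"
  assumes B: "B \<in> sets (natfilt M X n)"
  shows "(\<integral>\<^sup>+\<omega>. g (maxX X n \<omega>) (X (Suc n) \<omega>) * indicator B \<omega> \<partial>M) =
    (\<Sum>m. emeasure M (B \<inter> {\<omega>\<in>space M. maxX X n \<omega> = m}) * (\<Sum>x. g m x * ennreal (pk M X (int x))))"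
proof -
  let ?Y = "maxX X n" and ?Z = "X (Suc n)"
  have Ym: "?Y \<in> measurable M (count_space UNIV)" by (rule maxX_meas)
  have Zm: "?Z \<in> measurable M (count_space UNIV)" by (rule Xm) simp
  have BM[measurable]: "B \<in> events" by (rule natfilt_sets_M[OF B])
  have YZ[measurable]: "\<And>y. {\<omega>\<in>space M. ?Y \<omega> = y} \<in> sets M" "\<And>y. {\<omega>\<in>space M. ?Z \<omega> = y} \<in> sets M"
    using eqset_M[OF Ym] eqset_M[OF Zm] by auto
  have gm0: "(\<lambda>\<omega>. g (?Y \<omega>) (?Z \<omega>)) \<in> borel_measurable M"
    by (rule cs_meas2[where h=g, OF Ym Zm]) simp
  have gm[measurable]: "(\<lambda>\<omega>. g (?Y \<omega>) (?Z \<omega>) * indicator B \<omega>) \<in> borel_measurable M"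
    using gm0 by measurable
  have "(\<integral>\<^sup>+\<omega>. g (?Y \<omega>) (?Z \<omega>) * indicator B \<omega> \<partial>M) =
      (\<Sum>m. \<integral>\<^sup>+\<omega>. (g (?Y \<omega>) (?Z \<omega>) * indicator B \<omega>) * indicator {\<omega>\<in>space M. ?Y \<omega> = m} \<omega> \<partial>M)"
    by (rule decomp[OF Ym gm])
  also have "\<dots> = (\<Sum>m. \<Sum>x. \<integral>\<^sup>+\<omega>. ((g (?Y \<omega>) (?Z \<omega>) * indicator B \<omega>) * indicator {\<omega>\<in>space M. ?Y \<omega> = m} \<omega>)
        * indicator {\<omega>\<in>space M. ?Z \<omega> = x} \<omega> \<partial>M)"
    by (rule suminf_cong, rule decomp[OF Zm]) measurable
  also have "\<dots> = (\<Sum>m. \<Sum>x. g m x * emeasure M (B \<inter> {\<omega>\<in>space M. ?Y \<omega> = m} \<inter> {\<omega>\<in>space M. ?Z \<omega> = x}))"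
  proof (rule suminf_cong, rule suminf_cong)
    fix m x
    have "(\<integral>\<^sup>+\<omega>. ((g (?Y \<omega>) (?Z \<omega>) * indicator B \<omega>) * indicator {\<omega>\<in>space M. ?Y \<omega> = m} \<omega>)
        * indicator {\<omega>\<in>space M. ?Z \<omega> = x} \<omega> \<partial>M) =
      (\<integral>\<^sup>+\<omega>. g m x * indicator (B \<inter> {\<omega>\<in>space M. ?Y \<omega> = m} \<inter> {\<omega>\<in>space M. ?Z \<omega> = x}) \<omega> \<partial>M)"
      by (rule nn_integral_cong) (simp split: split_indicator)
    also have "\<dots> = g m x * emeasure M (B \<inter> {\<omega>\<in>space M. ?Y \<omega> = m} \<inter> {\<omega>\<in>space M. ?Z \<omega> = x})"
      by (rule nn_integral_cmult_indicator) measurable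
    finally show "(\<integral>\<^sup>+\<omega>. ((g (?Y \<omega>) (?Z \<omega>) * indicator B \<omega>) * indicator {\<omega>\<in>space M. ?Y \<omega> = m} \<omega>)
        * indicator {\<omega>\<in>space M. ?Z \<omega> = x} \<omega> \<partial>M) = g m x * emeasure M (B \<inter> {\<omega>\<in>space M. ?Y \<omega> = m} \<inter> {\<omega>\<in>space M. ?Z \<omega> = x})" .
  qed
  also have "\<dots> = (\<Sum>m. emeasure M (B \<inter> {\<omega>\<in>space M. ?Y \<omega> = m}) * (\<Sum>x. g m x * ennreal (pk M X (int x))))"
  proof (rule suminf_cong)
    fix m
    have C: "B \<inter> {\<omega>\<in>space M. ?Y \<omega> = m} \<in> sets (natfilt M X n)"
      using B eqset_natfilt by blast
    have CM: "B \<inter> {\<omega>\<in>space M. ?Y \<omega> = m} \<in> events" using natfilt_sets_M[OF C] .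
    have e: "emeasure M (B \<inter> {\<omega>\<in>space M. ?Y \<omega> = m} \<inter> {\<omega>\<in>space M. ?Z \<omega> = x}) =
        emeasure M (B \<inter> {\<omega>\<in>space M. ?Y \<omega> = m}) * ennreal (pk M X (int x))" for x
    proof -
      have eq: "{\<omega>\<in>space M. ?Z \<omega> = x} = ?Z -` {x} \<inter> space M" by blast
      have "prob (B \<inter> {\<omega>\<in>space M. ?Y \<omega> = m} \<inter> {\<omega>\<in>space M. ?Z \<omega> = x}) =
          prob (B \<inter> {\<omega>\<in>space M. ?Y \<omega> = m}) * prob {\<omega>\<in>space M. ?Z \<omega> = x}"
        unfolding eq by (rule indep_F[OF C])
      also have "prob {\<omega>\<in>space M. ?Z \<omega> = x} = pk M X (int x)"
        unfolding pk_nat by (rule same_dist) simp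
      finally show ?thesis
        using CM by (simp add: emeasure_eq_measure ennreal_mult[symmetric])
    qed
    show "(\<Sum>x. g m x * emeasure M (B \<inter> {\<omega>\<in>space M. ?Y \<omega> = m} \<inter> {\<omega>\<in>space M. ?Z \<omega> = x})) =
        emeasure M (B \<inter> {\<omega>\<in>space M. ?Y \<omega> = m}) * (\<Sum>x. g m x * ennreal (pk M X (int x)))"
      unfolding e ennreal_suminf_cmult[symmetric] by (simp add: ac_simps)
  qed
  finally show ?thesis .
qed


lemma pk_neg: "k < 0 \<Longrightarrow> pk M X k = 0" by (simp add: pk_def)

lemma pk_pos: "pk M X (int k) > 0" using ppos by (simp add: pk_def)

lemma X1_sets: "{\<omega>\<in>space M. P (X 1 \<omega>)} \<in> events" by (rule Xsets) simp

lemma yk_nat: "yk M X (int k) = prob {\<omega>\<in>space M. X 1 \<omega> > k}" by (simp add: yk_def)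

lemma yk_neg: "m < 0 \<Longrightarrow> yk M X m = 1" by (simp add: yk_def)

lemma yk_rec: "yk M X (int k - 1) = pk M X (int k) + yk M X (int k)"
proof (cases k)
  case 0
  have "prob {\<omega>\<in>space M. X 1 \<omega> = 0} + prob {\<omega>\<in>space M. X 1 \<omega> > 0} =
      prob ({\<omega>\<in>space M. X 1 \<omega> = 0} \<union> {\<omega>\<in>space M. X 1 \<omega> > 0})"
    by (rule finite_measure_Union[symmetric], rule X1_sets, rule X1_sets) auto
  also have "{\<omega>\<in>space M. X 1 \<omega> = 0} \<union> {\<omega>\<in>space M. X 1 \<omega> > 0} = space M" by auto
  finally show ?thesis using 0 prob_space by (simp add: yk_def pk_def)
next
  case (Suc j)
  have "prob {\<omega>\<in>space M. X 1 \<omega> = k} + prob {\<omega>\<in>space M. X 1 \<omega> > k} =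
      prob ({\<omega>\<in>space M. X 1 \<omega> = k} \<union> {\<omega>\<in>space M. X 1 \<omega> > k})"
    by (rule finite_measure_Union[symmetric], rule X1_sets, rule X1_sets) auto
  also have "{\<omega>\<in>space M. X 1 \<omega> = k} \<union> {\<omega>\<in>space M. X 1 \<omega> > k} = {\<omega>\<in>space M. X 1 \<omega> > j}"
    using Suc by auto
  moreover have nj: "nat (1 + int j) = Suc j" by arith
  ultimately show ?thesis using Suc by (simp add: yk_def pk_def)
qed

lemma yk_nonneg[simp]: "yk M X m \<ge> 0" by (simp add: yk_def)

lemma yk_pos: "yk M X m > 0"
proof (cases "m < 0")
  case True then show ?thesis by (simp add: yk_neg)
next
  case False
  then obtain k where k: "m = int k" by (metis nonneg_int_cases not_less)
  have "yk M X (int (Suc k) - 1) = pk M X (int (Suc k)) + yk M X (int (Suc k))" by (rule yk_rec)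
  then have "yk M X m = pk M X (int (Suc k)) + yk M X (int (Suc k))" using k by simp
  then show ?thesis using pk_pos[of "Suc k"] yk_nonneg[of "int (Suc k)"] by linarith
qed

lemma yk_le1: "yk M X m \<le> 1" by (simp add: yk_def)

lemma pk_le_yk: "pk M X (int k) \<le> yk M X (int k - 1)"
  using yk_rec[of k] yk_nonneg[of "int k"] by linarith

lemma sk_nonneg[simp]: "sk M X d i \<ge> 0" by (simp add: sk_def)

lemma SUMP:
  assumes c: "c \<ge> 0"
  shows "(\<Sum>i. ennreal (if int i \<ge> c then pk M X (int i + e) else 0)) = ennreal (yk M X (c + e - 1))"
proof -
  define A where "A i = (if int i \<ge> c then {\<omega>\<in>space M. int (X 1 \<omega>) = int i + e} else {})" for i
  have Aev: "A i \<in> events" for i unfolding A_def using X1_sets[of "\<lambda>v. int v = int i + e"] by simp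
  have em: "emeasure M (A i) = ennreal (if int i \<ge> c then pk M X (int i + e) else 0)" for i
  proof (cases "int i \<ge> c")
    case True
    show ?thesis
    proof (cases "int i + e < 0")
      case True
      then have "A i = {}" unfolding A_def by auto
      then show ?thesis using True by (simp add: pk_neg)
    next
      case F: False
      have "A i = {\<omega>\<in>space M. X 1 \<omega> = nat (int i + e)}" unfolding A_def using True F by auto
      then show ?thesis using True F by (simp add: emeasure_eq_measure pk_def)
    qed
  next
    case False then show ?thesis by (simp add: A_def)
  qed
  have disj: "disjoint_family A" unfolding disjoint_family_on_def A_def by auto
  have U: "(\<Union>i. A i) = {\<omega>\<in>space M. int (X 1 \<omega>) \<ge> c + e}"
  proof (rule set_eqI, rule iffI)
    fix \<omega> assume "\<omega> \<in> (\<Union>i. A i)"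
    then show "\<omega> \<in> {\<omega>\<in>space M. int (X 1 \<omega>) \<ge> c + e}" unfolding A_def by (auto split: if_splits)
  next
    fix \<omega> assume w: "\<omega> \<in> {\<omega>\<in>space M. int (X 1 \<omega>) \<ge> c + e}"
    then have "\<omega> \<in> A (nat (int (X 1 \<omega>) - e))" unfolding A_def using c by auto
    then show "\<omega> \<in> (\<Union>i. A i)" by blast
  qed
  have "(\<Sum>i. emeasure M (A i)) = emeasure M (\<Union>i. A i)"
    by (rule suminf_emeasure) (use Aev disj in auto)
  also have "\<dots> = ennreal (yk M X (c + e - 1))"
  proof (cases "c + e - 1 < 0")
    case True
    then have "(\<Union>i. A i) = space M" unfolding U by auto
    then show ?thesis using True by (simp add: yk_neg emeasure_space_1)
  next
    case False
    then have "(\<Union>i. A i) = {\<omega>\<in>space M. X 1 \<omega> > nat (c + e - 1)}" unfolding U by auto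
    then show ?thesis using False X1_sets by (simp add: yk_def emeasure_eq_measure)
  qed
  finally show ?thesis unfolding em .
qed

lemma suminf_swap_ennreal: "(\<Sum>x. \<Sum>i. f i x) = (\<Sum>i. \<Sum>x. f i x :: ennreal)"
proof -
  have "(\<Sum>x. \<Sum>i. f i x) = (\<integral>\<^sup>+x. (\<Sum>i. f i x) \<partial>count_space UNIV)"
    by (simp add: nn_integral_count_space_nat)
  also have "\<dots> = (\<Sum>i. \<integral>\<^sup>+x. f i x \<partial>count_space UNIV)"
    by (rule nn_integral_suminf) simp
  also have "\<dots> = (\<Sum>i. \<Sum>x. f i x)" by (simp add: nn_integral_count_space_nat)
  finally show ?thesis .
qed


lemma A1: "(\<Sum>x. ennreal (if int x > int m + \<delta> then 1 else 0) * ennreal (pk M X (int x))) = ennreal (yk M X (int m + \<delta>))"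
proof -
  define c where "c = max 0 (int m + \<delta> + 1)"
  have "(\<Sum>x. ennreal (if int x > int m + \<delta> then 1 else 0) * ennreal (pk M X (int x))) =
      (\<Sum>x. ennreal (if int x \<ge> c then pk M X (int x + 0) else 0))"
    by (rule suminf_cong) (auto simp: c_def)
  also have "\<dots> = ennreal (yk M X (c + 0 - 1))" by (rule SUMP) (simp add: c_def)
  also have "yk M X (c + 0 - 1) = yk M X (int m + \<delta>)"
    by (cases "int m + \<delta> + 1 \<ge> 0") (auto simp: c_def yk_neg)
  finally show ?thesis .
qed

lemma theta_diff: "theta M X d (max m x) - theta M X d m = (\<Sum>i\<in>{m<..x}. sk M X d (int i))"
proof (cases "x \<le> m")
  case True then show ?thesis by (simp add: max_def)
next
  case False
  have "{0..x} = {0..m} \<union> {m<..x}" using False by auto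
  then have "theta M X d x = theta M X d m + (\<Sum>i\<in>{m<..x}. sk M X d (int i))"
  proof -
    have d: "{0..m} \<inter> {m<..x} = {}" by auto
    show ?thesis unfolding theta_def \<open>{0..x} = {0..m} \<union> {m<..x}\<close>
      by (rule sum.union_disjoint) (use d in auto)
  qed
  then show ?thesis using False by (simp add: max_def)
qed

lemma A2: "(\<Sum>x. ennreal (theta M X \<delta> (max m x) - theta M X \<delta> m) * ennreal (pk M X (int x))) = ennreal (yk M X (int m + \<delta>))"
proof -
  have e1: "ennreal (theta M X \<delta> (max m x) - theta M X \<delta> m) =
      (\<Sum>i. ennreal (if m < i \<and> i \<le> x then sk M X \<delta> (int i) else 0))" for x
  proof -
    have "(\<Sum>i. ennreal (if m < i \<and> i \<le> x then sk M X \<delta> (int i) else 0)) =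
        (\<Sum>i\<in>{m<..x}. ennreal (if m < i \<and> i \<le> x then sk M X \<delta> (int i) else 0))"
      by (rule suminf_finite) auto
    also have "\<dots> = (\<Sum>i\<in>{m<..x}. ennreal (sk M X \<delta> (int i)))" by (rule sum.cong) auto
    also have "\<dots> = ennreal (\<Sum>i\<in>{m<..x}. sk M X \<delta> (int i))" by simp
    finally show ?thesis by (simp add: theta_diff)
  qed
  have e2: "(\<Sum>x. ennreal (if m < i \<and> i \<le> x then sk M X \<delta> (int i) else 0) * ennreal (pk M X (int x))) =
      ennreal (if int i \<ge> int m + 1 then pk M X (int i + \<delta>) else 0)" for i
  proof (cases "m < i")
    case False then show ?thesis by simp
  next
    case True
    have "(\<Sum>x. ennreal (if m < i \<and> i \<le> x then sk M X \<delta> (int i) else 0) * ennreal (pk M X (int x))) =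
        (\<Sum>x. ennreal (sk M X \<delta> (int i)) * ennreal (if int x \<ge> int i then pk M X (int x + 0) else 0))"
    proof (rule suminf_cong)
      fix x show "ennreal (if m < i \<and> i \<le> x then sk M X \<delta> (int i) else 0) * ennreal (pk M X (int x)) =
        ennreal (sk M X \<delta> (int i)) * ennreal (if int x \<ge> int i then pk M X (int x + 0) else 0)"
        using True by (cases "i \<le> x") simp_all
    qed
    also have "\<dots> = ennreal (sk M X \<delta> (int i)) * (\<Sum>x. ennreal (if int x \<ge> int i then pk M X (int x + 0) else 0))"
      by (rule ennreal_suminf_cmult)
    also have "\<dots> = ennreal (sk M X \<delta> (int i)) * ennreal (yk M X (int i + 0 - 1))"
      by (subst SUMP) simp_all
    also have "\<dots> = ennreal (pk M X (int i + \<delta>))"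
      using yk_pos[of "int i - 1"] by (simp add: sk_def ennreal_mult[symmetric])
    finally show ?thesis using True by simp
  qed
  have "(\<Sum>x. ennreal (theta M X \<delta> (max m x) - theta M X \<delta> m) * ennreal (pk M X (int x))) =
     (\<Sum>x. \<Sum>i. ennreal (if m < i \<and> i \<le> x then sk M X \<delta> (int i) else 0) * ennreal (pk M X (int x)))"
    unfolding e1 by (simp only: ennreal_suminf_multc)
  also have "\<dots> = (\<Sum>i. \<Sum>x. ennreal (if m < i \<and> i \<le> x then sk M X \<delta> (int i) else 0) * ennreal (pk M X (int x)))"
    by (rule suminf_swap_ennreal)
  also have "\<dots> = (\<Sum>i. ennreal (if int i \<ge> int m + 1 then pk M X (int i + \<delta>) else 0))"
    unfolding e2 ..
  also have "\<dots> = ennreal (yk M X (int m + 1 + \<delta> - 1))" by (rule SUMP) simp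
  finally show ?thesis by simp
qed


definition Ik :: "nat \<Rightarrow> 'a \<Rightarrow> real" where
  "Ik n \<omega> = (if int (X (Suc n) \<omega>) > int (maxX X n \<omega>) + \<delta> then 1 else 0)"
definition Dk :: "nat \<Rightarrow> 'a \<Rightarrow> real" where
  "Dk n \<omega> = theta M X \<delta> (maxX X (Suc n) \<omega>) - theta M X \<delta> (maxX X n \<omega>)"
definition Z :: "nat \<Rightarrow> 'a \<Rightarrow> real" where
  "Z n \<omega> = Nrec X \<delta> n \<omega> - theta M X \<delta> (maxX X n \<omega>)"

lemma Z_Suc: "Z (Suc n) \<omega> = Z n \<omega> + Ik n \<omega> - Dk n \<omega>"
  by (simp add: Z_def Ik_def Dk_def Nrec_Suc)

lemma Z_0: "Z 0 = (\<lambda>\<omega>. - theta M X \<delta> 0)"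
  by (rule ext) (simp add: Z_def)

lemma Dk_alt: "Dk n \<omega> = theta M X \<delta> (max (maxX X n \<omega>) (X (Suc n) \<omega>)) - theta M X \<delta> (maxX X n \<omega>)"
  by (simp add: Dk_def maxX_Suc)

lemma Dk_nonneg: "Dk n \<omega> \<ge> 0"
  unfolding Dk_alt theta_diff by (rule sum_nonneg) simp

lemma Ik_meas: "Ik n \<in> borel_measurable (natfilt M X (Suc n))"
proof -
  have "(\<lambda>\<omega>. (\<lambda>a b. if int b > int a + \<delta> then 1 else (0::real)) (maxX X n \<omega>) (X (Suc n) \<omega>))
      \<in> borel_measurable (natfilt M X (Suc n))"
    by (rule cs_meas2[OF maxX_meas_natfilt X_meas_natfilt]) simp_all
  then show ?thesis by (simp add: Ik_def[abs_def])
qed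

lemma Dk_meas: "Dk n \<in> borel_measurable (natfilt M X (Suc n))"
proof -
  have "(\<lambda>\<omega>. (\<lambda>a b. theta M X \<delta> (max a b) - theta M X \<delta> a) (maxX X n \<omega>) (X (Suc n) \<omega>))
      \<in> borel_measurable (natfilt M X (Suc n))"
    by (rule cs_meas2[OF maxX_meas_natfilt X_meas_natfilt]) simp_all
  then show ?thesis by (simp add: Dk_alt[abs_def])
qed

lemma subalg_natfilt: "m \<le> n \<Longrightarrow> subalgebra (natfilt M X n) (natfilt M X m)"
  unfolding subalgebra_def using natfilt_mono by simp

lemma Z_meas: "Z n \<in> borel_measurable (natfilt M X n)"
proof (induction n)
  case 0 then show ?case by (simp add: Z_0)
next
  case (Suc n)
  have "Z n \<in> borel_measurable (natfilt M X (Suc n))"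
    by (rule measurable_from_subalg[OF subalg_natfilt Suc]) simp
  then have "(\<lambda>\<omega>. Z n \<omega> + Ik n \<omega> - Dk n \<omega>) \<in> borel_measurable (natfilt M X (Suc n))"
    using Ik_meas Dk_meas by (intro borel_measurable_diff borel_measurable_add)
  then show ?case by (simp add: Z_Suc[abs_def])
qed

lemma Ik_measM: "Ik n \<in> borel_measurable M"
  by (rule measurable_from_subalg[OF subalg Ik_meas])
lemma Dk_measM: "Dk n \<in> borel_measurable M"
  by (rule measurable_from_subalg[OF subalg Dk_meas])
lemma Z_measM: "Z n \<in> borel_measurable M"
  by (rule measurable_from_subalg[OF subalg Z_meas])

lemma key:
  assumes B: "B \<in> sets (natfilt M X n)"
  shows "(\<integral>\<^sup>+\<omega>. ennreal (Ik n \<omega> * indicator B \<omega>) \<partial>M) = (\<integral>\<^sup>+\<omega>. ennreal (Dk n \<omega> * indicator B \<omega>) \<partial>M)"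
proof -
  let ?g1 = "\<lambda>m x. ennreal (if int x > int m + \<delta> then 1 else 0)"
  let ?g2 = "\<lambda>m x. ennreal (theta M X \<delta> (max m x) - theta M X \<delta> m)"
  have "(\<integral>\<^sup>+\<omega>. ennreal (Ik n \<omega> * indicator B \<omega>) \<partial>M) =
      (\<integral>\<^sup>+\<omega>. ?g1 (maxX X n \<omega>) (X (Suc n) \<omega>) * indicator B \<omega> \<partial>M)"
    by (rule nn_integral_cong) (simp add: Ik_def split: split_indicator)
  also have "\<dots> = (\<Sum>m. emeasure M (B \<inter> {\<omega>\<in>space M. maxX X n \<omega> = m}) * (\<Sum>x. ?g1 m x * ennreal (pk M X (int x))))"
    by (rule Dlem[OF B])
  also have "\<dots> = (\<Sum>m. emeasure M (B \<inter> {\<omega>\<in>space M. maxX X n \<omega> = m}) * ennreal (yk M X (int m + \<delta>)))"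
    by (simp only: A1)
  also have "\<dots> = (\<Sum>m. emeasure M (B \<inter> {\<omega>\<in>space M. maxX X n \<omega> = m}) * (\<Sum>x. ?g2 m x * ennreal (pk M X (int x))))"
    by (simp only: A2)
  also have "\<dots> = (\<integral>\<^sup>+\<omega>. ?g2 (maxX X n \<omega>) (X (Suc n) \<omega>) * indicator B \<omega> \<partial>M)"
    by (rule Dlem[OF B, symmetric])
  also have "\<dots> = (\<integral>\<^sup>+\<omega>. ennreal (Dk n \<omega> * indicator B \<omega>) \<partial>M)"
    by (rule nn_integral_cong) (simp add: Dk_alt split: split_indicator)
  finally show ?thesis .
qed


lemma Ik_B_int: assumes B: "B \<in> sets (natfilt M X n)"
  shows "integrable M (\<lambda>\<omega>. Ik n \<omega> * indicator B \<omega>)"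
proof (rule integrable_const_bound[where B=1])
  show "AE x in M. norm (Ik n x * indicator B x) \<le> 1" by (simp add: Ik_def split: split_indicator)
  have "B \<in> events" by (rule natfilt_sets_M[OF B])
  then show "(\<lambda>\<omega>. Ik n \<omega> * indicator B \<omega>) \<in> borel_measurable M"
    using Ik_measM by (intro borel_measurable_times borel_measurable_indicator) auto
qed

lemma Dk_B_int: assumes B: "B \<in> sets (natfilt M X n)"
  shows "integrable M (\<lambda>\<omega>. Dk n \<omega> * indicator B \<omega>)"
proof (rule integrableI_nonneg)
  have "B \<in> events" by (rule natfilt_sets_M[OF B])
  then show "(\<lambda>\<omega>. Dk n \<omega> * indicator B \<omega>) \<in> borel_measurable M"
    using Dk_measM by (intro borel_measurable_times borel_measurable_indicator) auto
  show "AE x in M. 0 \<le> Dk n x * indicator B x" using Dk_nonneg by simp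
  have "(\<integral>\<^sup>+\<omega>. ennreal (Dk n \<omega> * indicator B \<omega>) \<partial>M) = (\<integral>\<^sup>+\<omega>. ennreal (Ik n \<omega> * indicator B \<omega>) \<partial>M)"
    by (rule key[OF B, symmetric])
  also have "\<dots> \<le> (\<integral>\<^sup>+\<omega>. 1 \<partial>M)"
    by (rule nn_integral_mono) (simp add: Ik_def split: split_indicator)
  also have "\<dots> < \<infinity>" by (simp add: emeasure_space_1)
  finally show "(\<integral>\<^sup>+\<omega>. ennreal (Dk n \<omega> * indicator B \<omega>) \<partial>M) < \<infinity>" .
qed

lemma Ik_Dk_eq: assumes B: "B \<in> sets (natfilt M X n)"
  shows "(\<integral>\<omega>. Ik n \<omega> * indicator B \<omega> \<partial>M) = (\<integral>\<omega>. Dk n \<omega> * indicator B \<omega> \<partial>M)"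
proof -
  have BM: "B \<in> events" by (rule natfilt_sets_M[OF B])
  have "(\<integral>\<omega>. Ik n \<omega> * indicator B \<omega> \<partial>M) = enn2real (\<integral>\<^sup>+\<omega>. ennreal (Ik n \<omega> * indicator B \<omega>) \<partial>M)"
  proof (rule integral_eq_nn_integral)
    show "(\<lambda>\<omega>. Ik n \<omega> * indicator B \<omega>) \<in> borel_measurable M"
      using Ik_measM BM by (intro borel_measurable_times borel_measurable_indicator) auto
  qed (simp add: Ik_def split: split_indicator)
  also have "\<dots> = enn2real (\<integral>\<^sup>+\<omega>. ennreal (Dk n \<omega> * indicator B \<omega>) \<partial>M)" by (simp only: key[OF B])
  also have "\<dots> = (\<integral>\<omega>. Dk n \<omega> * indicator B \<omega> \<partial>M)"
  proof (rule integral_eq_nn_integral[symmetric])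
    show "(\<lambda>\<omega>. Dk n \<omega> * indicator B \<omega>) \<in> borel_measurable M"
      using Dk_measM BM by (intro borel_measurable_times borel_measurable_indicator) auto
  qed (simp add: Dk_nonneg)
  finally show ?thesis .
qed

lemma space_in_natfilt: "space M \<in> sets (natfilt M X n)"
  using sets.top[of "natfilt M X n"] by simp

lemma Ik_int: "integrable M (Ik n)"
proof -
  have "integrable M (\<lambda>\<omega>. Ik n \<omega> * indicator (space M) \<omega>)" by (rule Ik_B_int[OF space_in_natfilt])
  moreover have "integrable M (\<lambda>\<omega>. Ik n \<omega> * indicator (space M) \<omega>) = integrable M (Ik n)"
    by (rule Bochner_Integration.integrable_cong) simp_all
  ultimately show ?thesis by simp
qed

lemma Dk_int: "integrable M (Dk n)"
proof -
  have "integrable M (\<lambda>\<omega>. Dk n \<omega> * indicator (space M) \<omega>)" by (rule Dk_B_int[OF space_in_natfilt])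
  moreover have "integrable M (\<lambda>\<omega>. Dk n \<omega> * indicator (space M) \<omega>) = integrable M (Dk n)"
    by (rule Bochner_Integration.integrable_cong) simp_all
  ultimately show ?thesis by simp
qed

lemma Z_int: "integrable M (Z n)"
proof (induction n)
  case 0 then show ?case by (simp add: Z_0)
next
  case (Suc n)
  have "integrable M (\<lambda>\<omega>. Z n \<omega> + Ik n \<omega> - Dk n \<omega>)"
    using Suc Ik_int Dk_int by (intro Bochner_Integration.integrable_diff Bochner_Integration.integrable_add)
  then show ?case by (simp add: Z_Suc[abs_def])
qed

lemma mart_step: assumes B: "B \<in> sets (natfilt M X n)"
  shows "(\<integral>\<omega>. indicator B \<omega> *\<^sub>R Z (Suc n) \<omega> \<partial>M) = (\<integral>\<omega>. indicator B \<omega> *\<^sub>R Z n \<omega> \<partial>M)"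
proof -
  have BM: "B \<in> events" by (rule natfilt_sets_M[OF B])
  have i1: "integrable M (\<lambda>\<omega>. indicator B \<omega> *\<^sub>R Z n \<omega>)" by (rule integrable_mult_indicator[OF BM Z_int])
  have "(\<integral>\<omega>. indicator B \<omega> *\<^sub>R Z (Suc n) \<omega> \<partial>M) =
      (\<integral>\<omega>. (indicator B \<omega> *\<^sub>R Z n \<omega> + Ik n \<omega> * indicator B \<omega>) - Dk n \<omega> * indicator B \<omega> \<partial>M)"
    by (rule Bochner_Integration.integral_cong) (simp_all add: Z_Suc algebra_simps)
  also have "\<dots> = (\<integral>\<omega>. indicator B \<omega> *\<^sub>R Z n \<omega> \<partial>M) + (\<integral>\<omega>. Ik n \<omega> * indicator B \<omega> \<partial>M)
      - (\<integral>\<omega>. Dk n \<omega> * indicator B \<omega> \<partial>M)"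
    using i1 Ik_B_int[OF B] Dk_B_int[OF B] by simp
  finally show ?thesis using Ik_Dk_eq[OF B] by simp
qed

lemma mart: assumes "m \<le> n" "B \<in> sets (natfilt M X m)"
  shows "(\<integral>\<omega>. indicator B \<omega> *\<^sub>R Z n \<omega> \<partial>M) = (\<integral>\<omega>. indicator B \<omega> *\<^sub>R Z m \<omega> \<partial>M)"
  using assms(1)
proof (induction n rule: dec_induct)
  case base then show ?case ..
next
  case (step k)
  have "B \<in> sets (natfilt M X k)" using natfilt_mono[OF step(1)] assms(2) by blast
  then show ?case using mart_step step(3) by simp
qed

lemma martingale: "martingale_on M (natfilt M X) Z"
  unfolding martingale_on_def
proof (intro conjI allI impI)
  fix n :: nat
  show "subalgebra M (natfilt M X n)" by (rule subalg)
  show "Z n \<in> borel_measurable (natfilt M X n)" by (rule Z_meas)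
  show "integrable M (Z n)" by (rule Z_int)
next
  fix m n :: nat assume "m \<le> n"
  then show "sets (natfilt M X m) \<subseteq> sets (natfilt M X n)" by (rule natfilt_mono)
next
  fix m n :: nat assume mn: "m \<le> n"
  interpret S: finite_measure_subalgebra M "natfilt M X m"
    by unfold_locales (rule subalg)
  show "AE \<omega> in M. real_cond_exp M (natfilt M X m) (Z n) \<omega> = Z m \<omega>"
  proof (rule S.real_cond_exp_charact)
    fix A assume "A \<in> sets (natfilt M X m)"
    then show "(\<integral>x\<in>A. Z n x \<partial>M) = (\<integral>x\<in>A. Z m x \<partial>M)"
      unfolding set_lebesgue_integral_def by (rule mart[OF mn])
  qed (simp_all add: Z_int Z_meas)
qed


definition pp :: "nat \<Rightarrow> real" where "pp k = pk M X (int k)"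
definition yy :: "nat \<Rightarrow> real" where "yy k = yk M X (int k - 1)"
definition rr :: "nat \<Rightarrow> real" where "rr k = rk M X (int k)"
definition LL :: "nat \<Rightarrow> real" where "LL m = (\<Sum>i<m. rr i)"

lemma yy_0: "yy 0 = 1" by (simp add: yy_def yk_neg)
lemma yy_Suc: "yy (Suc k) = yy k - pp k"
  using yk_rec[of k] by (simp add: yy_def pp_def)
lemma yy_pos: "yy k > 0" by (simp add: yy_def yk_pos)
lemma yy_le1: "yy k \<le> 1" by (simp add: yy_def yk_le1)
lemma pp_pos: "pp k > 0" by (simp add: pp_def pk_pos)
lemma pp_le: "pp k \<le> yy k" using yy_Suc[of k] yy_pos[of "Suc k"] by linarith
lemma rr_eq: "rr k = pp k / yy k" by (simp add: rr_def rk_def pp_def yy_def)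
lemma rr_nonneg: "rr k \<ge> 0" using pp_pos[of k] yy_pos[of k] by (simp add: rr_eq)
lemma rr_le1: "rr k \<le> 1" using pp_le[of k] yy_pos[of k] by (simp add: rr_eq)
lemma yy_Suc_mult: "yy (Suc k) = yy k * (1 - rr k)"
  using yy_pos[of k] by (simp add: rr_eq yy_Suc field_simps)
lemma LL_nonneg: "LL m \<ge> 0" unfolding LL_def by (rule sum_nonneg) (simp add: rr_nonneg)
lemma LL_Suc: "LL (Suc m) = LL m + rr m" by (simp add: LL_def)
lemma LL_add: "LL (m + k) \<le> LL m + real k"
proof (induction k)
  case 0 then show ?case by simp
next
  case (Suc k) then show ?case using LL_Suc[of "m + k"] rr_le1[of "m+k"] by simp
qed

lemma yy_exp: "yy m \<le> exp (- LL m)"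
proof (induction m)
  case 0 then show ?case by (simp add: yy_0 LL_def)
next
  case (Suc m)
  have "yy (Suc m) = yy m * (1 - rr m)" by (rule yy_Suc_mult)
  also have "\<dots> \<le> exp (- LL m) * exp (- rr m)"
  proof (rule mult_mono)
    show "1 - rr m \<le> exp (- rr m)" using exp_ge_add_one_self[of "- rr m"] by simp
  qed (use Suc yy_pos[of m] rr_le1[of m] in auto)
  also have "\<dots> = exp (- LL (Suc m))" by (simp add: LL_Suc exp_add[symmetric])
  finally show ?case .
qed

lemma theta0: "theta M X 0 m = LL (Suc m)"
proof -
  have "theta M X 0 m = (\<Sum>i\<in>{0..m}. rr i)"
    unfolding theta_def by (rule sum.cong) (simp_all add: sk_def rr_def rk_def)
  also have "{0..m} = {..<Suc m}" by auto
  finally show ?thesis by (simp add: LL_def)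
qed

lemma E1: assumes "t \<ge> (0::real)" shows "(1 + t) ^ 3 \<le> 512 * exp (t / 2)"
proof -
  have a: "1 + t / 8 \<le> exp (t / 8)" by (rule exp_ge_add_one_self)
  have b: "1 \<le> 1 + t / 8" using assms by simp
  have "(1 + t) ^ 3 \<le> (8 * (1 + t / 8)) ^ 3" by (rule power_mono) (use assms in auto)
  also have "\<dots> = 512 * (1 + t / 8) ^ 3" by (subst power_mult_distrib) simp
  also have "(1 + t / 8) ^ 3 \<le> (1 + t / 8) ^ 4"
    by (rule power_increasing) (use b in auto)
  also have "(1 + t / 8) ^ 4 \<le> exp (t / 8) ^ 4" by (rule power_mono[OF a]) (use b in auto)
  also have "exp (t / 8) ^ 4 = exp (t / 2)"
    using exp_of_nat_mult[of 4 "t / 8"] by simp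
  finally show ?thesis by simp
qed

lemma S1: assumes "0 \<le> b" "b \<le> a" "0 < (a::real)"
  shows "(a - b) / sqrt a \<le> 2 * (sqrt a - sqrt b)"
proof -
  have sa: "sqrt a > 0" using assms by simp
  have "a - b = (sqrt a - sqrt b) * (sqrt a + sqrt b)"
    using assms by (simp add: algebra_simps)
  also have "\<dots> \<le> (sqrt a - sqrt b) * (2 * sqrt a)"
    by (rule mult_left_mono) (use assms in auto)
  finally have "a - b \<le> 2 * (sqrt a - sqrt b) * sqrt a" by (simp add: algebra_simps)
  then show ?thesis using sa by (simp add: divide_simps)
qed

lemma term_bound: "pp m * (1 + LL m) ^ 3 \<le> 1024 * (sqrt (yy m) - sqrt (yy (Suc m)))"
proof -
  have y: "yy m > 0" by (rule yy_pos)
  have sy: "sqrt (yy m) \<le> exp (- LL m / 2)"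
  proof -
    have "sqrt (yy m) \<le> sqrt (exp (- LL m))" using yy_exp by simp
    also have "exp (- LL m) = (exp (- LL m / 2))\<^sup>2"
      using exp_of_nat_mult[of 2 "- LL m / 2"] by (simp add: power2_eq_square)
    also have "sqrt \<dots> = exp (- LL m / 2)" by simp
    finally show ?thesis .
  qed
  have e: "exp (LL m / 2) \<le> 1 / sqrt (yy m)"
  proof -
    have "exp (LL m / 2) = 1 / exp (- LL m / 2)" by (simp add: exp_minus field_simps)
    also have "\<dots> \<le> 1 / sqrt (yy m)"
      by (rule divide_left_mono) (use sy y in auto)
    finally show ?thesis .
  qed
  have "pp m * (1 + LL m) ^ 3 \<le> pp m * (512 * exp (LL m / 2))"
    by (rule mult_left_mono[OF E1[OF LL_nonneg]]) (use pp_pos[of m] in simp)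
  also have "\<dots> \<le> pp m * (512 * (1 / sqrt (yy m)))"
    by (rule mult_left_mono) (use e pp_pos[of m] in auto)
  also have "\<dots> = 512 * ((yy m - yy (Suc m)) / sqrt (yy m))" by (simp add: yy_Suc)
  also have "\<dots> \<le> 512 * (2 * (sqrt (yy m) - sqrt (yy (Suc m))))"
    by (rule mult_left_mono[OF S1]) (use yy_pos[of "Suc m"] yy_Suc[of m] pp_pos[of m] y in auto)
  finally show ?thesis by simp
qed

lemma SL: "summable (\<lambda>m. pp m * (1 + LL m) ^ 3)"
proof (rule summableI_nonneg_bounded)
  fix n
  show "0 \<le> pp n * (1 + LL n) ^ 3" using pp_pos[of n] LL_nonneg[of n] by simp
  have "(\<Sum>i<n. pp i * (1 + LL i) ^ 3) \<le> (\<Sum>i<n. 1024 * (sqrt (yy i) - sqrt (yy (Suc i))))"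
    by (rule sum_mono) (rule term_bound)
  also have "\<dots> = 1024 * (sqrt (yy 0) - sqrt (yy n))"
    using sum_lessThan_telescope'[of "\<lambda>i. 1024 * sqrt (yy i)" n] by (simp add: algebra_simps)
  also have "\<dots> \<le> 1024" using yy_0 yy_pos[of n] by simp
  finally show "(\<Sum>i<n. pp i * (1 + LL i) ^ 3) \<le> 1024" .
qed

lemma reduce:
  assumes C: "C \<ge> 0" "\<And>m. theta M X \<delta> m \<le> C * (1 + LL m)"
  shows "summable (\<lambda>m. pp m * theta M X \<delta> m ^ 3)"
proof (rule summable_comparison_test')
  show "summable (\<lambda>m. C ^ 3 * (pp m * (1 + LL m) ^ 3))" by (rule summable_mult[OF SL])
  fix m
  have t0: "theta M X \<delta> m \<ge> 0" unfolding theta_def by (rule sum_nonneg) simp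
  have "theta M X \<delta> m ^ 3 \<le> (C * (1 + LL m)) ^ 3" by (rule power_mono[OF C(2) t0])
  then have "pp m * theta M X \<delta> m ^ 3 \<le> pp m * (C * (1 + LL m)) ^ 3"
    by (rule mult_left_mono) (use pp_pos[of m] in simp)
  then show "norm (pp m * theta M X \<delta> m ^ 3) \<le> C ^ 3 * (pp m * (1 + LL m) ^ 3)"
    using t0 pp_pos[of m] by (simp add: power_mult_distrib)
qed


lemma sum_reindex_le:
  fixes g :: "nat \<Rightarrow> real"
  assumes "inj_on h A" "h ` A \<subseteq> B" "finite B" "\<And>j. 0 \<le> g j"
  shows "(\<Sum>i\<in>A. g (h i)) \<le> (\<Sum>j\<in>B. g j)"
proof -
  have "(\<Sum>i\<in>A. g (h i)) = (\<Sum>j\<in>h ` A. g j)" using sum.reindex[OF assms(1), of g] by simp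
  also have "\<dots> \<le> (\<Sum>j\<in>B. g j)" by (rule sum_mono2) (use assms in auto)
  finally show ?thesis .
qed

lemma yy_mono: "i \<le> j \<Longrightarrow> yy j \<le> yy i"
  by (rule lift_Suc_antimono_le[of yy]) (use yy_Suc pp_pos in \<open>auto simp: less_imp_le\<close>)

lemma sk_pos_delta: "sk M X (int d) (int i) = pp (i + d) / yy i"
  by (simp add: sk_def pp_def yy_def)

lemma case_c:
  assumes "\<delta> \<ge> 0"
  shows "summable (\<lambda>m. pp m * theta M X \<delta> m ^ 3)"
proof (rule reduce)
  define d where "d = nat \<delta>"
  have dd: "\<delta> = int d" using assms by (simp add: d_def)
  show "real d + 1 \<ge> 0" by simp
  fix m
  have "theta M X \<delta> m = (\<Sum>i\<in>{0..m}. pp (i + d) / yy i)"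
    unfolding theta_def dd sk_pos_delta ..
  also have "\<dots> \<le> (\<Sum>i\<in>{0..m}. rr (i + d))"
  proof (rule sum_mono)
    fix i
    have "pp (i + d) / yy i \<le> pp (i + d) / yy (i + d)"
      by (rule divide_left_mono) (use yy_mono[of i "i+d"] yy_pos[of "i+d"] yy_pos[of i] pp_pos[of "i+d"] in auto)
    then show "pp (i + d) / yy i \<le> rr (i + d)" by (simp add: rr_eq)
  qed
  also have "\<dots> \<le> (\<Sum>j\<in>{..<Suc m + d}. rr j)"
    by (rule sum_reindex_le[of "\<lambda>i. i + d"]) (auto simp: rr_nonneg inj_on_def)
  also have "\<dots> = LL (Suc m + d)" by (simp add: LL_def)
  also have "\<dots> \<le> LL (Suc m) + real d" by (rule LL_add)
  also have "\<dots> \<le> LL m + 1 + real d" using LL_Suc[of m] rr_le1[of m] by simp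
  also have "\<dots> \<le> (real d + 1) * (1 + LL m)" using LL_nonneg[of m] by (simp add: algebra_simps)
  finally show "theta M X \<delta> m \<le> (real d + 1) * (1 + LL m)" .
qed

lemma one_minus_rr_pos: "1 - rr k > 0"
proof -
  have "yy (Suc k) > 0" by (rule yy_pos)
  then have "yy k * (1 - rr k) > 0" by (simp add: yy_Suc_mult)
  then show ?thesis using yy_pos[of k] by (simp add: zero_less_mult_iff)
qed

lemma sk_neg_delta: "sk M X (- int d) (int i) = (if d \<le> i then pp (i - d) / yy i else 0)"
  by (auto simp: sk_def pp_def yy_def pk_neg of_nat_diff)

lemma yy_lower: assumes "\<And>k. 1 - rr k \<ge> c" "c \<ge> 0"
  shows "yy (j + k) \<ge> c ^ k * yy j"
proof (induction k)
  case 0 then show ?case by simp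
next
  case (Suc k)
  have "c ^ Suc k * yy j = c * (c ^ k * yy j)" by simp
  also have "\<dots> \<le> (1 - rr (j + k)) * yy (j + k)"
    by (rule mult_mono) (use assms Suc yy_pos[of j] rr_le1[of "j+k"] in auto)
  also have "\<dots> = yy (j + Suc k)" by (simp add: yy_Suc_mult mult.commute)
  finally show ?case .
qed

lemma case_a:
  assumes "\<delta> < 0" "limsup (\<lambda>k::nat. ereal (rk M X (int k))) < 1"
  shows "summable (\<lambda>m. pp m * theta M X \<delta> m ^ 3)"
proof -
  define d where "d = nat (- \<delta>)"
  have dd: "\<delta> = - int d" using assms by (simp add: d_def)
  have ls: "limsup (\<lambda>k. ereal (rr k)) < 1" using assms(2) by (simp add: rr_def)
  obtain \<rho> where \<rho>: "limsup (\<lambda>k. ereal (rr k)) < ereal \<rho>" "ereal \<rho> < 1"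
    using ereal_dense2[OF ls] by blast
  have "eventually (\<lambda>k. ereal (rr k) < ereal \<rho>) sequentially" by (rule Limsup_lessD[OF \<rho>(1)])
  then obtain K where K: "\<And>k. k \<ge> K \<Longrightarrow> rr k < \<rho>" unfolding eventually_sequentially by auto
  have \<rho>1: "\<rho> < 1" using \<rho>(2) by simp
  define c where "c = Min (insert (1 - \<rho>) ((\<lambda>k. 1 - rr k) ` {..<K}))"
  have c_pos: "c > 0" unfolding c_def using \<rho>1 one_minus_rr_pos by (subst Min_gr_iff) auto
  have c_le: "1 - rr k \<ge> c" for k
  proof (cases "k < K")
    case True then show ?thesis unfolding c_def by (intro Min_le) auto
  next
    case False
    then have "1 - rr k > 1 - \<rho>" using K[of k] by simp
    moreover have "c \<le> 1 - \<rho>" unfolding c_def by (intro Min_le) auto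
    ultimately show ?thesis by simp
  qed
  show ?thesis
  proof (rule reduce)
    show "1 / c ^ d \<ge> 0" using c_pos by simp
    fix m
    have s_le: "sk M X \<delta> (int i) \<le> (if d \<le> i then rr (i - d) / c ^ d else 0)" for i
    proof (cases "d \<le> i")
      case True
      define j where "j = i - d"
      have j: "i = j + d" using True by (simp add: j_def)
      have "yy (j + d) \<ge> c ^ d * yy j" by (rule yy_lower[OF c_le]) (use c_pos in simp)
      then have "pp j / yy (j + d) \<le> pp j / (c ^ d * yy j)"
        by (intro divide_left_mono) (use c_pos yy_pos[of j] pp_pos[of j] yy_pos[of "j+d"] in auto)
      also have "\<dots> = rr j / c ^ d" by (simp add: rr_eq)
      finally have le: "pp j / yy (j + d) \<le> rr j / c ^ d" .
      have jj: "i - d = j" using j by simp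
      have "sk M X \<delta> (int i) = pp j / yy (j + d)" unfolding dd sk_neg_delta using True jj j by simp
      then show ?thesis using le True jj by simp
    next
      case False then show ?thesis unfolding dd sk_neg_delta by simp
    qed
    have "theta M X \<delta> m \<le> (\<Sum>i\<in>{0..m}. if d \<le> i then rr (i - d) / c ^ d else 0)"
      unfolding theta_def by (rule sum_mono) (rule s_le)
    also have "\<dots> = (\<Sum>i\<in>{i\<in>{0..m}. d \<le> i}. rr (i - d) / c ^ d)"
      by (rule sum.inter_filter[symmetric]) simp
    also have "\<dots> = (\<Sum>i\<in>{i\<in>{0..m}. d \<le> i}. rr (i - d)) / c ^ d"
      by (simp add: sum_divide_distrib)
    also have "(\<Sum>i\<in>{i\<in>{0..m}. d \<le> i}. rr (i - d)) \<le> (\<Sum>j\<in>{..<Suc m}. rr j)"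
    proof (rule sum_reindex_le[of "\<lambda>i. i - d"])
      show "inj_on (\<lambda>i. i - d) {i\<in>{0..m}. d \<le> i}"
      proof (rule inj_onI)
        fix x y assume "x \<in> {i\<in>{0..m}. d \<le> i}" "y \<in> {i\<in>{0..m}. d \<le> i}" "x - d = y - d"
        then show "x = y" by auto
      qed
      show "(\<lambda>i. i - d) ` {i\<in>{0..m}. d \<le> i} \<subseteq> {..<Suc m}" by auto
    qed (simp_all add: rr_nonneg)
    also have "(\<Sum>j\<in>{..<Suc m}. rr j) = LL (Suc m)" by (simp add: LL_def)
    also have "LL (Suc m) \<le> 1 + LL m" using LL_Suc[of m] rr_le1[of m] by simp
    finally have "theta M X \<delta> m \<le> (1 + LL m) / c ^ d"
      using c_pos by (simp add: divide_right_mono)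
    then show "theta M X \<delta> m \<le> 1 / c ^ d * (1 + LL m)" by simp
  qed
qed


lemma bern: assumes "0 \<le> x" "x \<le> (1::real)" shows "1 - real n * x \<le> (1 - x) ^ n"
proof (induction n)
  case 0 then show ?case by simp
next
  case (Suc n)
  have "(1 - x) * (1 - real n * x) \<le> (1 - x) * (1 - x) ^ n"
    by (rule mult_left_mono[OF Suc]) (use assms in simp)
  moreover have "1 - real (Suc n) * x \<le> (1 - x) * (1 - real n * x)"
    using assms by (simp add: algebra_simps)
  ultimately show ?case by simp
qed

lemma alg1:
  fixes T P Y a q :: real
  assumes "0 \<le> T" "T \<le> (real m + 1) / (a * q ^ m)" "a > 0" "q > 0" "q ^ 3 \<ge> 1 / 2"
    "0 \<le> P" "P \<le> Y * (1 / 32) ^ m"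
  shows "P * T ^ 3 \<le> Y / a ^ 3 * (1 / 2) ^ m"
proof -
  have "m < 2 ^ m" by (rule less_exp)
  then have "Suc m \<le> 2 ^ m" by (rule Suc_leI)
  then have m1: "real m + 1 \<le> 2 ^ m"
  proof -
    have "real (Suc m) \<le> real (2 ^ m)" using \<open>Suc m \<le> 2 ^ m\<close> by (simp only: of_nat_le_iff)
    then show ?thesis by simp
  qed
  have qq: "(q ^ m) ^ 3 = (q ^ 3) ^ m" by (metis power_mult mult.commute)
  have "T ^ 3 \<le> ((real m + 1) / (a * q ^ m)) ^ 3" by (rule power_mono[OF assms(2,1)])
  also have "\<dots> = (real m + 1) ^ 3 / (a ^ 3 * (q ^ 3) ^ m)"
    by (simp add: power_divide power_mult_distrib qq)
  also have "\<dots> \<le> (2 ^ m) ^ 3 / (a ^ 3 * (1 / 2) ^ m)"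
  proof (rule frac_le)
    show "0 \<le> ((2::real) ^ m) ^ 3" by simp
    show "(real m + 1) ^ 3 \<le> (2 ^ m) ^ 3" by (rule power_mono[OF m1]) simp
    show "0 < a ^ 3 * (1 / 2 :: real) ^ m" using assms(3) by simp
    show "a ^ 3 * (1 / 2) ^ m \<le> a ^ 3 * (q ^ 3) ^ m"
      by (rule mult_left_mono[OF power_mono[OF assms(5)]]) (use assms(3) in simp_all)
  qed
  also have "(2 ^ m) ^ 3 / (a ^ 3 * (1 / 2) ^ m) = (16::real) ^ m / a ^ 3"
  proof -
    have "((2::real) ^ m) ^ 3 = (2 ^ 3) ^ m" by (metis power_mult mult.commute)
    then have "((2::real) ^ m) ^ 3 = 8 ^ m" by simp
    moreover have "(8::real) ^ m * 2 ^ m = 16 ^ m" by (simp add: power_mult_distrib[symmetric])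
    ultimately show ?thesis using assms(3) by (simp add: power_one_over field_simps)
  qed
  finally have T3: "T ^ 3 \<le> 16 ^ m / a ^ 3" .
  have "P * T ^ 3 \<le> (Y * (1 / 32) ^ m) * (16 ^ m / a ^ 3)"
    by (rule mult_mono[OF assms(7) T3 _ ]) (use assms in simp_all)
  also have "\<dots> = Y / a ^ 3 * ((1 / 32) ^ m * 16 ^ m)" by simp
  also have "(1 / 32 :: real) ^ m * 16 ^ m = (1 / 2) ^ m" by (simp add: power_mult_distrib[symmetric])
  finally show ?thesis .
qed


lemma case_b:
  assumes "\<delta> < 0" "(\<lambda>k::nat. rk M X (int k)) \<longlonglongrightarrow> 1"
    "(\<lambda>k::nat. (1 - rk M X (int k)) / (1 - rk M X (int k - 1))) \<longlonglongrightarrow> 1"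
  shows "summable (\<lambda>m. pp m * theta M X \<delta> m ^ 3)"
proof -
  define d where "d = nat (- \<delta>)"
  have dd: "\<delta> = - int d" using assms(1) by (simp add: d_def)
  have d1: "d \<ge> 1" using assms(1) by (simp add: d_def)
  define tt where "tt k = 1 - rr k" for k
  have tt_pos: "tt k > 0" for k using one_minus_rr_pos by (simp add: tt_def)
  have yy_tt: "yy (Suc k) = yy k * tt k" for k by (simp add: tt_def yy_Suc_mult)
  have "(\<lambda>k. rr k) \<longlonglongrightarrow> 1" using assms(2) by (simp add: rr_def)
  then have "eventually (\<lambda>k. dist (rr k) 1 < 1/32) sequentially" by (rule tendstoD) simp
  then obtain K1 where K1: "\<And>k. k \<ge> K1 \<Longrightarrow> dist (rr k) 1 < 1/32"
    unfolding eventually_sequentially by blast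
  have tsmall: "tt k \<le> 1/32" if "k \<ge> K1" for k
  proof -
    have "\<bar>rr k - 1\<bar> < 1/32" using K1[OF that] by (simp add: dist_real_def)
    then show ?thesis unfolding tt_def using abs_less_iff[of "rr k - 1" "1/32"] by linarith
  qed
  define \<mu> where "\<mu> = 1 - 1 / (6 * real d)"
  have \<mu>_pos: "0 < \<mu>" "\<mu> \<le> 1" using d1 by (simp_all add: \<mu>_def field_simps)
  have "eventually (\<lambda>k. dist ((1 - rk M X (int k)) / (1 - rk M X (int k - 1))) 1 < 1 / (6 * real d)) sequentially"
    by (rule tendstoD[OF assms(3)]) (use d1 in simp)
  then obtain K2 where K2: "\<And>k. k \<ge> K2 \<Longrightarrow> dist ((1 - rk M X (int k)) / (1 - rk M X (int k - 1))) 1 < 1 / (6 * real d)"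
    unfolding eventually_sequentially by blast
  have tgrow: "tt (Suc j) \<ge> \<mu> * tt j" if "Suc j \<ge> K2" for j
  proof -
    have "dist (tt (Suc j) / tt j) 1 < 1 / (6 * real d)" using K2[OF that] by (simp add: tt_def rr_def)
    then have "\<bar>tt (Suc j) / tt j - 1\<bar> < 1 / (6 * real d)" by (simp add: dist_real_def)
    then have "tt (Suc j) / tt j > \<mu>" unfolding \<mu>_def
      using abs_less_iff[of "tt (Suc j) / tt j - 1" "1 / (6 * real d)"] by linarith
    then show ?thesis using tt_pos[of j] by (simp add: less_divide_eq)
  qed
  define c where "c = Min (tt ` {..K2})"
  have c_pos: "c > 0" unfolding c_def using tt_pos by (subst Min_gr_iff) auto
  have c_le: "c \<le> tt j" if "j \<le> K2" for j unfolding c_def using that by (intro Min_le) auto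
  have tlow: "tt j \<ge> c * \<mu> ^ j" for j
  proof (induction j)
    case 0 then show ?case using c_le[of 0] by simp
  next
    case (Suc j)
    show ?case
    proof (cases "Suc j \<le> K2")
      case True
      have "\<mu> ^ Suc j \<le> 1" by (rule power_le_one) (use \<mu>_pos in auto)
      then have "c * \<mu> ^ Suc j \<le> c * 1"
        by (rule mult_left_mono) (use c_pos in simp)
      then show ?thesis using c_le[OF True] by simp
    next
      case False
      then have "tt (Suc j) \<ge> \<mu> * tt j" by (intro tgrow) simp
      moreover have "\<mu> * (c * \<mu> ^ j) \<le> \<mu> * tt j" by (rule mult_left_mono[OF Suc]) (use \<mu>_pos in simp)
      ultimately show ?thesis by (simp add: mult_ac)
    qed
  qed
  have ylow: "yy (j + k) \<ge> (c * \<mu> ^ N) ^ k * yy j" if "j + k \<le> N" for j k N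
    using that
  proof (induction k)
    case 0 then show ?case by simp
  next
    case (Suc k)
    have IH: "(c * \<mu> ^ N) ^ k * yy j \<le> yy (j + k)" using Suc by simp
    have "c * \<mu> ^ N \<le> c * \<mu> ^ (j + k)"
      by (rule mult_left_mono[OF power_decreasing]) (use Suc.prems \<mu>_pos c_pos in auto)
    also have "\<dots> \<le> tt (j + k)" by (rule tlow)
    finally have ct: "c * \<mu> ^ N \<le> tt (j + k)" .
    have "(c * \<mu> ^ N) ^ Suc k * yy j = (c * \<mu> ^ N) * ((c * \<mu> ^ N) ^ k * yy j)" by simp
    also have "\<dots> \<le> tt (j + k) * yy (j + k)"
      by (rule mult_mono[OF ct IH]) (use tt_pos[of "j+k"] yy_pos[of "j+k"] yy_pos[of j] c_pos \<mu>_pos in simp_all)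
    also have "\<dots> = yy (j + Suc k)" by (simp add: yy_tt mult.commute)
    finally show ?case .
  qed
  define q where "q = \<mu> ^ d"
  define a where "a = c ^ d"
  have q_pos: "q > 0" using \<mu>_pos by (simp add: q_def)
  have q3: "q ^ 3 \<ge> 1/2"
  proof -
    have "q ^ 3 = \<mu> ^ (3 * d)" unfolding q_def by (metis power_mult mult.commute)
    also have "\<dots> = (1 - 1 / (6 * real d)) ^ (3 * d)" by (simp add: \<mu>_def)
    finally have eq: "q ^ 3 = (1 - 1 / (6 * real d)) ^ (3 * d)" .
    have "1 - real (3 * d) * (1 / (6 * real d)) \<le> (1 - 1 / (6 * real d)) ^ (3 * d)"
      by (rule bern) (use d1 in simp_all)
    moreover have "1 - real (3 * d) * (1 / (6 * real d)) = 1/2" using d1 by simp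
    ultimately show ?thesis using eq by simp
  qed
  have a_pos: "a > 0" using c_pos by (simp add: a_def)
  have sbound: "sk M X \<delta> (int i) \<le> 1 / (a * q ^ m)" if "i \<le> m" for i m
  proof (cases "d \<le> i")
    case False then show ?thesis unfolding dd sk_neg_delta using a_pos q_pos by simp
  next
    case True
    define j where "j = i - d"
    have j: "i = j + d" using True by (simp add: j_def)
    have "yy (j + d) \<ge> (c * \<mu> ^ m) ^ d * yy j" by (rule ylow) (use j that in simp)
    moreover have "(\<mu> ^ m) ^ d = (\<mu> ^ d) ^ m" by (metis power_mult mult.commute)
    then have "(c * \<mu> ^ m) ^ d = a * q ^ m" by (simp add: a_def q_def power_mult_distrib)
    ultimately have yl: "yy (j + d) \<ge> a * q ^ m * yy j" by simp
    have "pp j / yy (j + d) \<le> yy j / (a * q ^ m * yy j)"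
      by (rule frac_le) (use pp_le[of j] yl pp_pos[of j] a_pos q_pos yy_pos[of j] in simp_all)
    also have "\<dots> = 1 / (a * q ^ m)" using yy_pos[of j] by simp
    finally have le: "pp j / yy (j + d) \<le> 1 / (a * q ^ m)" .
    have jj: "i - d = j" using j by simp
    have "sk M X \<delta> (int i) = pp j / yy (j + d)" unfolding dd sk_neg_delta using True jj j by simp
    then show ?thesis using le by simp
  qed
  have th: "theta M X \<delta> m \<le> (real m + 1) / (a * q ^ m)" for m
  proof -
    have "theta M X \<delta> m \<le> (\<Sum>i\<in>{0..m}. 1 / (a * q ^ m))"
      unfolding theta_def by (rule sum_mono) (rule sbound; simp)
    also have "\<dots> = (real m + 1) / (a * q ^ m)" by simp
    finally show ?thesis .
  qed
  have ysmall: "yy m \<le> 32 ^ K1 * (1/32) ^ m" for m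
  proof (induction m)
    case 0 then show ?case using yy_0 by simp
  next
    case (Suc m)
    show ?case
    proof (cases "m \<ge> K1")
      case True
      have "yy (Suc m) = yy m * tt m" by (rule yy_tt)
      also have "\<dots> \<le> (32 ^ K1 * (1/32) ^ m) * (1/32)"
        by (rule mult_mono[OF Suc tsmall[OF True]]) (use yy_pos[of m] tt_pos[of m] in simp_all)
      finally show ?thesis by simp
    next
      case False
      then have "Suc m \<le> K1" by simp
      then have "(32::real) ^ Suc m \<le> 32 ^ K1" by (rule power_increasing) simp
      then have "1 \<le> 32 ^ K1 * (1/32::real) ^ Suc m" by (simp add: power_one_over field_simps)
      then show ?thesis using yy_le1[of "Suc m"] by linarith
    qed
  qed
  show ?thesis
  proof (rule summable_comparison_test')
    show "summable (\<lambda>m. 32 ^ K1 / a ^ 3 * (1/2::real) ^ m)"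
      by (rule summable_mult) (rule summable_geometric; simp)
    fix m
    have t0: "theta M X \<delta> m \<ge> 0" unfolding theta_def by (rule sum_nonneg) simp
    have "pp m * theta M X \<delta> m ^ 3 \<le> 32 ^ K1 / a ^ 3 * (1/2) ^ m"
      by (rule alg1[OF t0 th a_pos q_pos q3]) (use pp_pos[of m] pp_le[of m] ysmall[of m] in simp_all)
    then show "norm (pp m * theta M X \<delta> m ^ 3) \<le> 32 ^ K1 / a ^ 3 * (1/2) ^ m"
      using t0 pp_pos[of m] by simp
  qed
qed


lemma probM_le: assumes "n \<ge> 1"
  shows "prob {\<omega>\<in>space M. maxX X n \<omega> = m} \<le> real n * pp m"
proof -
  have sub: "{\<omega>\<in>space M. maxX X n \<omega> = m} \<subseteq> (\<Union>i\<in>{1..n}. {\<omega>\<in>space M. X i \<omega> = m})"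
  proof
    fix \<omega> assume w: "\<omega> \<in> {\<omega>\<in>space M. maxX X n \<omega> = m}"
    have ne: "(\<lambda>i. X i \<omega>) ` {1..n} \<noteq> {}" using assms by auto
    have "Max ((\<lambda>i. X i \<omega>) ` {1..n}) \<in> (\<lambda>i. X i \<omega>) ` {1..n}" by (rule Max_in[OF _ ne]) simp
    moreover have "maxX X n \<omega> = Max ((\<lambda>i. X i \<omega>) ` {1..n})" using assms by (simp add: maxX_def)
    ultimately obtain i where "i \<in> {1..n}" "X i \<omega> = m" using w by auto
    then show "\<omega> \<in> (\<Union>i\<in>{1..n}. {\<omega>\<in>space M. X i \<omega> = m})" using w by blast
  qed
  have ev: "(\<lambda>i. {\<omega>\<in>space M. X i \<omega> = m}) ` {1..n} \<subseteq> events" using Xsets by auto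
  have "prob {\<omega>\<in>space M. maxX X n \<omega> = m} \<le> prob (\<Union>i\<in>{1..n}. {\<omega>\<in>space M. X i \<omega> = m})"
    by (rule finite_measure_mono[OF sub]) (use ev in blast)
  also have "\<dots> \<le> (\<Sum>i\<in>{1..n}. prob {\<omega>\<in>space M. X i \<omega> = m})"
    by (rule finite_measure_subadditive_finite[OF _ ev]) simp
  also have "\<dots> = (\<Sum>i\<in>{1..n}. pp m)"
  proof (rule sum.cong)
    fix i assume "i \<in> {1..n}"
    then have "i \<ge> 1" by simp
    then show "prob {\<omega>\<in>space M. X i \<omega> = m} = pp m"
      using same_dist[of i "\<lambda>v. v = m"] unfolding pp_def pk_nat by simp
  qed simp
  also have "\<dots> = real n * pp m" by simp
  finally show ?thesis .
qed

lemma cube_nn: assumes "n \<ge> 1" "summable (\<lambda>m. pp m * theta M X \<delta> m ^ 3)"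
  shows "(\<integral>\<^sup>+\<omega>. ennreal (theta M X \<delta> (maxX X n \<omega>) ^ 3) \<partial>M) < \<infinity>"
proof -
  let ?Y = "maxX X n"
  have Ym: "?Y \<in> measurable M (count_space UNIV)" by (rule maxX_meas)
  have fm: "(\<lambda>\<omega>. ennreal (theta M X \<delta> (?Y \<omega>) ^ 3)) \<in> borel_measurable M"
    by (rule cs_meas1[OF Ym]) simp
  have "(\<integral>\<^sup>+\<omega>. ennreal (theta M X \<delta> (?Y \<omega>) ^ 3) \<partial>M) =
      (\<Sum>m. \<integral>\<^sup>+\<omega>. ennreal (theta M X \<delta> (?Y \<omega>) ^ 3) * indicator {\<omega>\<in>space M. ?Y \<omega> = m} \<omega> \<partial>M)"
    by (rule decomp[OF Ym fm])
  also have "\<dots> = (\<Sum>m. ennreal (theta M X \<delta> m ^ 3) * emeasure M {\<omega>\<in>space M. ?Y \<omega> = m})"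
  proof (rule suminf_cong)
    fix m
    have "(\<integral>\<^sup>+\<omega>. ennreal (theta M X \<delta> (?Y \<omega>) ^ 3) * indicator {\<omega>\<in>space M. ?Y \<omega> = m} \<omega> \<partial>M) =
        (\<integral>\<^sup>+\<omega>. ennreal (theta M X \<delta> m ^ 3) * indicator {\<omega>\<in>space M. ?Y \<omega> = m} \<omega> \<partial>M)"
      by (rule nn_integral_cong) (simp split: split_indicator)
    also have "\<dots> = ennreal (theta M X \<delta> m ^ 3) * emeasure M {\<omega>\<in>space M. ?Y \<omega> = m}"
      by (rule nn_integral_cmult_indicator[OF eqset_M[OF Ym]])
    finally show "(\<integral>\<^sup>+\<omega>. ennreal (theta M X \<delta> (?Y \<omega>) ^ 3) * indicator {\<omega>\<in>space M. ?Y \<omega> = m} \<omega> \<partial>M) =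
        ennreal (theta M X \<delta> m ^ 3) * emeasure M {\<omega>\<in>space M. ?Y \<omega> = m}" .
  qed
  also have "\<dots> \<le> (\<Sum>m. ennreal (real n * (pp m * theta M X \<delta> m ^ 3)))"
  proof (rule suminf_le)
    fix m
    have t0: "theta M X \<delta> m \<ge> 0" unfolding theta_def by (rule sum_nonneg) simp
    have "emeasure M {\<omega>\<in>space M. ?Y \<omega> = m} = ennreal (prob {\<omega>\<in>space M. ?Y \<omega> = m})"
      using eqset_M[OF Ym] by (simp add: emeasure_eq_measure)
    also have "\<dots> \<le> ennreal (real n * pp m)" by (rule ennreal_leI[OF probM_le[OF assms(1)]])
    finally have "ennreal (theta M X \<delta> m ^ 3) * emeasure M {\<omega>\<in>space M. ?Y \<omega> = m} \<le>
        ennreal (theta M X \<delta> m ^ 3) * ennreal (real n * pp m)" by (rule mult_left_mono) simp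
    also have "\<dots> = ennreal (real n * (pp m * theta M X \<delta> m ^ 3))"
      using t0 pp_pos[of m] by (simp add: ennreal_mult[symmetric] mult_ac)
    finally show "ennreal (theta M X \<delta> m ^ 3) * emeasure M {\<omega>\<in>space M. ?Y \<omega> = m} \<le>
        ennreal (real n * (pp m * theta M X \<delta> m ^ 3))" .
  qed simp_all
  also have "\<dots> = ennreal (\<Sum>m. real n * (pp m * theta M X \<delta> m ^ 3))"
  proof (rule suminf_ennreal2)
    fix m
    have t0: "theta M X \<delta> m \<ge> 0" unfolding theta_def by (rule sum_nonneg) simp
    then show "0 \<le> real n * (pp m * theta M X \<delta> m ^ 3)" using pp_pos[of m] by simp
  qed (rule summable_mult[OF assms(2)])
  also have "\<dots> < \<infinity>" by simp
  finally show ?thesis .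
qed

lemma cube_ineq: assumes "0 \<le> a" "0 \<le> (b::real)" shows "(a + b) ^ 3 \<le> 8 * (a ^ 3 + b ^ 3)"
proof (cases "a \<le> b")
  case True
  have "(a + b) ^ 3 \<le> (2 * b) ^ 3" by (rule power_mono) (use True assms in auto)
  also have "\<dots> = 8 * b ^ 3" by (simp add: power_mult_distrib)
  finally have h: "(a + b) ^ 3 \<le> 8 * b ^ 3" .
  have "0 \<le> a ^ 3" using assms by simp
  moreover have "8 * (a ^ 3 + b ^ 3) = 8 * a ^ 3 + 8 * b ^ 3" by (rule distrib_left)
  ultimately show ?thesis using h by linarith
next
  case False
  have "(a + b) ^ 3 \<le> (2 * a) ^ 3" by (rule power_mono) (use False assms in auto)
  also have "\<dots> = 8 * a ^ 3" by (simp add: power_mult_distrib)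
  finally have h: "(a + b) ^ 3 \<le> 8 * a ^ 3" .
  have "0 \<le> b ^ 3" using assms by simp
  moreover have "8 * (a ^ 3 + b ^ 3) = 8 * a ^ 3 + 8 * b ^ 3" by (rule distrib_left)
  ultimately show ?thesis using h by linarith
qed

lemma Nrec_bounds: "0 \<le> Nrec X \<delta> n \<omega>" "Nrec X \<delta> n \<omega> \<le> real n"
proof -
  show "0 \<le> Nrec X \<delta> n \<omega>" unfolding Nrec_def by (rule sum_nonneg) simp
  have "Nrec X \<delta> n \<omega> \<le> of_nat (card {1..n}) * 1" unfolding Nrec_def by (rule sum_bounded_above) simp
  then show "Nrec X \<delta> n \<omega> \<le> real n" by simp
qed

lemma cube_int: assumes "n \<ge> 1" "summable (\<lambda>m. pp m * theta M X \<delta> m ^ 3)"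
  shows "integrable M (\<lambda>\<omega>. \<bar>Nrec X \<delta> n \<omega> - theta M X \<delta> (maxX X n \<omega>)\<bar> ^ 3)"
proof -
  have tm: "(\<lambda>\<omega>. theta M X \<delta> (maxX X n \<omega>) ^ 3) \<in> borel_measurable M"
    by (rule cs_meas1[OF maxX_meas]) simp
  have ti: "integrable M (\<lambda>\<omega>. theta M X \<delta> (maxX X n \<omega>) ^ 3)"
  proof (rule integrableI_nonneg[OF tm])
    show "AE x in M. 0 \<le> theta M X \<delta> (maxX X n x) ^ 3"
      by (simp add: theta_def sum_nonneg)
    show "(\<integral>\<^sup>+x. ennreal (theta M X \<delta> (maxX X n x) ^ 3) \<partial>M) < \<infinity>" by (rule cube_nn[OF assms])
  qed
  have fi: "integrable M (\<lambda>\<omega>. 8 * (real n ^ 3 + theta M X \<delta> (maxX X n \<omega>) ^ 3))"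
    using ti by (intro integrable_mult_right Bochner_Integration.integrable_add) simp_all
  show ?thesis
  proof (rule Bochner_Integration.integrable_bound[OF fi])
    have "(\<lambda>\<omega>. Z n \<omega>) \<in> borel_measurable M" by (rule Z_measM)
    then have "(\<lambda>\<omega>. \<bar>Z n \<omega>\<bar> ^ 3) \<in> borel_measurable M" by measurable
    then show "(\<lambda>\<omega>. \<bar>Nrec X \<delta> n \<omega> - theta M X \<delta> (maxX X n \<omega>)\<bar> ^ 3) \<in> borel_measurable M"
      by (simp add: Z_def)
    show "AE x in M. norm (\<bar>Nrec X \<delta> n x - theta M X \<delta> (maxX X n x)\<bar> ^ 3) \<le>
        norm (8 * (real n ^ 3 + theta M X \<delta> (maxX X n x) ^ 3))"
    proof (rule AE_I2)
      fix x
      let ?N = "Nrec X \<delta> n x" and ?T = "theta M X \<delta> (maxX X n x)"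
      have T0: "?T \<ge> 0" by (simp add: theta_def sum_nonneg)
      have ab: "\<bar>?N - ?T\<bar> \<le> real n + ?T" using Nrec_bounds[of n x] T0 by linarith
      have "\<bar>?N - ?T\<bar> ^ 3 \<le> (real n + ?T) ^ 3" by (rule power_mono[OF ab]) simp
      also have "\<dots> \<le> 8 * (real n ^ 3 + ?T ^ 3)" by (rule cube_ineq) (use T0 in simp_all)
      finally show "norm (\<bar>?N - ?T\<bar> ^ 3) \<le> norm (8 * (real n ^ 3 + ?T ^ 3))" using T0 by simp
    qed
  qed
qed

end

theorem proposition2p1:
  fixes M :: "'a measure" and X :: "nat \<Rightarrow> 'a \<Rightarrow> nat" and \<delta> :: int
  assumes "prob_space M"
    and "\<And>i. i \<ge> 1 \<Longrightarrow> X i \<in> measurable M (count_space UNIV)"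
    and "prob_space.indep_vars M (\<lambda>_. count_space UNIV) X {1..}"
    and "\<And>i. i \<ge> 1 \<Longrightarrow> distr M (count_space UNIV) (X i) = distr M (count_space UNIV) (X 1)"
    and "\<And>k. measure M {\<omega> \<in> space M. X 1 \<omega> = k} > 0"
  shows "martingale_on M (natfilt M X) (\<lambda>n \<omega>. Nrec X \<delta> n \<omega> - theta M X \<delta> (maxX X n \<omega>)) \<and>
    ((\<delta> < 0 \<and> limsup (\<lambda>k::nat. ereal (rk M X (int k))) < 1) \<or>
         (\<delta> < 0 \<and> (\<lambda>k::nat. rk M X (int k)) \<longlonglongrightarrow> 1 \<and>
            (\<lambda>k::nat. (1 - rk M X (int k)) / (1 - rk M X (int k - 1))) \<longlonglongrightarrow> 1) \<or>
         \<delta> \<ge> 0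
     \<longrightarrow> (\<forall>n\<ge>1. integrable M (\<lambda>\<omega>. \<bar>Nrec X \<delta> n \<omega> - theta M X \<delta> (maxX X n \<omega>)\<bar> ^ 3)))"
proof -
  interpret R: recs M X \<delta>
    by (rule recs.intro[OF assms(1)]) (unfold recs_axioms_def, use assms in blast)
  have Zeq: "(\<lambda>n \<omega>. Nrec X \<delta> n \<omega> - theta M X \<delta> (maxX X n \<omega>)) = R.Z"
    by (intro ext) (simp add: R.Z_def)
  show ?thesis
  proof (intro conjI impI allI)
    show "martingale_on M (natfilt M X) (\<lambda>n \<omega>. Nrec X \<delta> n \<omega> - theta M X \<delta> (maxX X n \<omega>))"
      unfolding Zeq by (rule R.martingale)
  next
    fix n :: nat
    assume C: "(\<delta> < 0 \<and> limsup (\<lambda>k::nat. ereal (rk M X (int k))) < 1) \<or>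
         (\<delta> < 0 \<and> (\<lambda>k::nat. rk M X (int k)) \<longlonglongrightarrow> 1 \<and>
            (\<lambda>k::nat. (1 - rk M X (int k)) / (1 - rk M X (int k - 1))) \<longlonglongrightarrow> 1) \<or>
         \<delta> \<ge> 0"
      and n: "n \<ge> 1"
    have S: "summable (\<lambda>m. R.pp m * theta M X \<delta> m ^ 3)"
      using C R.case_a R.case_b R.case_c by blast
    show "integrable M (\<lambda>\<omega>. \<bar>Nrec X \<delta> n \<omega> - theta M X \<delta> (maxX X n \<omega>)\<bar> ^ 3)"
      by (rule R.cube_int[OF n S])
  qed
qed

end
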